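(* Let $R$ be a dp-minimal integral domain with fraction field $K$ and maximal ideal $\mathfrak M$. For every prime ideal $\mathfrak p\neq\mathfrak M$ of $R$ we have $\mathfrak p:\mathfrak p=R_{\mathfrak p}$. If moreover $R$ is not a valuation ring, then $\mathfrak M^{-1}=\mathfrak M:\mathfrak M$.
   Context: Rings are commutative with identity; dp-minimal means the theory in the language of rings has dp-rank $1$ (such domains are local). For an ideal $I$ of a domain $R$ with fraction field $K$: $I:I=\{x\in K: xI\subseteq I\}$ and $I^{-1}=\{x\in K: xI\subseteq R\}$. *)

theory Defs
  imports Main "HOL-Computational_Algebra.Fraction_Field"
begin

datatype rtm = RVar nat | RZero | ROne | RAdd rtm rtm | RNeg rtm | RMul rtm rtm

datatype rfm = REq rtm rtm | RNot rfm | RAnd rfm rfm | RExists nat rfm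

fun teval :: "(nat \<Rightarrow> 'a::comm_ring_1) \<Rightarrow> rtm \<Rightarrow> 'a" where
  "teval e (RVar n) = e n"
| "teval e RZero = 0"
| "teval e ROne = 1"
| "teval e (RAdd s t) = teval e s + teval e t"
| "teval e (RNeg s) = - teval e s"
| "teval e (RMul s t) = teval e s * teval e t"

fun sat :: "(nat \<Rightarrow> 'a::comm_ring_1) \<Rightarrow> rfm \<Rightarrow> bool" where
  "sat e (REq s t) = (teval e s = teval e t)"
| "sat e (RNot f) = (\<not> sat e f)"
| "sat e (RAnd f g) = (sat e f \<and> sat e g)"
| "sat e (RExists n f) = (\<exists>a. sat (e(n := a)) f)"

text \<open>dp-minimality of the complete theory of the ring 'a: there is no ict-pattern of
  depth 2 (with the object variable x = variable 0 a single variable).  By compactness this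
  is equivalent to: for all formulas phi(x;y), psi(x;z) there is a finite bound n such that
  no n-by-n ict-array with parameters from the ring itself exists.\<close>

definition ict_array :: "'a::comm_ring_1 itself \<Rightarrow> rfm \<Rightarrow> rfm \<Rightarrow> nat \<Rightarrow> bool" where
  "ict_array _ \<phi> \<psi> n \<longleftrightarrow>
     (\<exists>(b :: nat \<Rightarrow> nat \<Rightarrow> 'a) (c :: nat \<Rightarrow> nat \<Rightarrow> 'a).
        \<forall>i<n. \<forall>j<n. \<exists>a.
          (\<forall>i'<n. sat ((b i')(0 := a)) \<phi> \<longleftrightarrow> i' = i) \<and>
          (\<forall>j'<n. sat ((c j')(0 := a)) \<psi> \<longleftrightarrow> j' = j))"

definition dp_minimal :: "'a::comm_ring_1 itself \<Rightarrow> bool" where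
  "dp_minimal T \<longleftrightarrow> (\<forall>\<phi> \<psi>. \<exists>n. \<not> ict_array T \<phi> \<psi> n)"

definition is_ideal :: "'a::comm_ring_1 set \<Rightarrow> bool" where
  "is_ideal I \<longleftrightarrow> 0 \<in> I \<and> (\<forall>x\<in>I. \<forall>y\<in>I. x + y \<in> I) \<and> (\<forall>r x. x \<in> I \<longrightarrow> r * x \<in> I)"

definition prime_ideal :: "'a::comm_ring_1 set \<Rightarrow> bool" where
  "prime_ideal P \<longleftrightarrow> is_ideal P \<and> P \<noteq> UNIV \<and> (\<forall>a b. a * b \<in> P \<longrightarrow> a \<in> P \<or> b \<in> P)"

definition maximal_ideal :: "'a::comm_ring_1 set \<Rightarrow> bool" where
  "maximal_ideal M \<longleftrightarrow> is_ideal M \<and> M \<noteq> UNIV \<and>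
     (\<forall>J. is_ideal J \<and> M \<subseteq> J \<longrightarrow> J = M \<or> J = UNIV)"

definition emb :: "'a::idom \<Rightarrow> 'a fract" where
  "emb a = Fract a 1"

definition colon :: "'a::idom fract set \<Rightarrow> 'a fract set \<Rightarrow> 'a fract set" where
  "colon I J = {x. \<forall>y\<in>J. x * y \<in> I}"

definition frac_inv :: "'a::idom set \<Rightarrow> 'a fract set" where
  "frac_inv I = colon (range emb) (emb ` I)"

definition localization :: "'a::idom set \<Rightarrow> 'a fract set" where
  "localization P = {Fract a s | a s. s \<notin> P}"

definition valuation_ring :: "'a::idom itself \<Rightarrow> bool" where
  "valuation_ring _ \<longleftrightarrow>
     (\<forall>x :: 'a fract. x \<in> range emb \<or> inverse x \<in> range emb)"

end

theory Submission imports Defs begin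

definition divf :: rfm where
  "divf = RExists 3 (REq (RAdd (RVar 0) (RNeg (RVar 1))) (RMul (RVar 2) (RVar 3)))"

lemma sat_divf: "sat e divf \<longleftrightarrow> (e 2 :: 'a::comm_ring_1) dvd (e 0 - e 1)"
  by (auto simp: divf_def dvd_def)

definition noarr :: "'a::comm_ring_1 itself \<Rightarrow> nat \<Rightarrow> bool" where
  "noarr T N \<longleftrightarrow> (\<forall>(a::'a) b f g. \<not>((\<forall>i<N. a dvd f i) \<and> (\<forall>i<N. \<forall>i'<N. i \<noteq> i' \<longrightarrow> \<not> b dvd (f i - f i'))
     \<and> (\<forall>j<N. b dvd g j) \<and> (\<forall>j<N. \<forall>j'<N. j \<noteq> j' \<longrightarrow> \<not> a dvd (g j - g j'))))"

lemma core:
  assumes "dp_minimal TYPE('a::comm_ring_1)"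
  obtains N where "noarr TYPE('a) N"
proof -
  obtain n where n: "\<not> ict_array TYPE('a) divf divf n"
    using assms unfolding dp_minimal_def by blast
  have "noarr TYPE('a) n"
    unfolding noarr_def
  proof (intro allI notI)
    fix a b :: 'a and f g
    assume H: "(\<forall>i<n. a dvd f i) \<and> (\<forall>i<n. \<forall>i'<n. i \<noteq> i' \<longrightarrow> \<not> b dvd (f i - f i'))
     \<and> (\<forall>j<n. b dvd g j) \<and> (\<forall>j<n. \<forall>j'<n. j \<noteq> j' \<longrightarrow> \<not> a dvd (g j - g j'))"
    define B where "B = (\<lambda>i (v::nat). if v = 1 then f i else b)"
    define C where "C = (\<lambda>j (v::nat). if v = 1 then g j else a)"
    have "ict_array TYPE('a) divf divf n"
      unfolding ict_array_def
    proof (rule exI[of _ B], rule exI[of _ C], intro allI impI)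
      fix i j assume ij: "i < n" "j < n"
      show "\<exists>x. (\<forall>i'<n. sat ((B i')(0 := x)) divf \<longleftrightarrow> i' = i) \<and>
          (\<forall>j'<n. sat ((C j')(0 := x)) divf \<longleftrightarrow> j' = j)"
      proof (rule exI[of _ "f i + g j"], intro conjI allI impI)
        fix i' assume i': "i' < n"
        have e: "f i + g j - f i' = (f i - f i') + g j" by simp
        have "b dvd (f i + g j - f i') \<longleftrightarrow> b dvd (f i - f i')"
          unfolding e using H ij by (simp add: dvd_add_left_iff)
        then show "sat ((B i')(0 := f i + g j)) divf \<longleftrightarrow> i' = i"
          using H ij i' by (auto simp: sat_divf B_def)
      next
        fix j' assume j': "j' < n"
        have e: "f i + g j - g j' = (g j - g j') + f i" by simp
        have "a dvd (f i + g j - g j') \<longleftrightarrow> a dvd (g j - g j')"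
          unfolding e using H ij by (simp add: dvd_add_left_iff)
        then show "sat ((C j')(0 := f i + g j)) divf \<longleftrightarrow> j' = j"
          using H ij j' by (auto simp: sat_divf C_def)
      qed
    qed
    with n show False by simp
  qed
  then show ?thesis using that by blast
qed


lemma ideal_mult: "is_ideal I \<Longrightarrow> x \<in> I \<Longrightarrow> r * x \<in> I"
  by (simp add: is_ideal_def)

lemma ideal_mult2: "is_ideal I \<Longrightarrow> x \<in> I \<Longrightarrow> x * r \<in> I"
  by (metis ideal_mult mult.commute)

lemma ideal_add: "is_ideal I \<Longrightarrow> x \<in> I \<Longrightarrow> y \<in> I \<Longrightarrow> x + y \<in> I"
  by (simp add: is_ideal_def)

lemma ideal_unit:
  assumes "is_ideal I" "u dvd 1" "u \<in> I" shows "I = UNIV"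
proof -
  obtain k where k: "1 = u * k" using assms(2) by (auto elim: dvdE)
  have "r \<in> I" for r
  proof -
    have "r = (r * k) * u" using k by (metis mult.assoc mult.commute mult_1_right)
    then show ?thesis using ideal_mult[OF assms(1) assms(3), of "r*k"] by simp
  qed
  then show ?thesis by auto
qed

lemma prime_pow:
  fixes s :: "'a::comm_ring_1"
  assumes "prime_ideal P" "s ^ n \<in> P" shows "s \<in> P"
  using assms(2)
proof (induction n)
  case 0
  then have "P = UNIV" using ideal_unit[of P 1] assms(1) by (simp add: prime_ideal_def)
  then show ?case using assms(1) by (simp add: prime_ideal_def)
next
  case (Suc n)
  then show ?case using assms(1) unfolding prime_ideal_def by auto
qed

lemma pairwise_from_lt:
  fixes f :: "nat \<Rightarrow> 'a::comm_ring_1"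
  assumes "\<And>i i'. i < i' \<Longrightarrow> i' < N \<Longrightarrow> \<not> d dvd (f i - f i')"
  shows "\<forall>i<N. \<forall>i'<N. i \<noteq> i' \<longrightarrow> \<not> d dvd (f i - f i')"
proof (intro allI impI)
  fix i i' assume h: "i < N" "i' < N" "i \<noteq> i'"
  show "\<not> d dvd (f i - f i')"
  proof (cases "i < i'")
    case True then show ?thesis using assms h by blast
  next
    case False
    then have "\<not> d dvd (f i' - f i)" using assms h by simp
    moreover have "f i - f i' = - (f i' - f i)" by simp
    ultimately show ?thesis by (metis dvd_minus_iff)
  qed
qed

lemma one_minus_pow: "(b::'a::comm_ring_1) dvd ((1 - b) ^ n - 1)"
proof (induction n)
  case 0 then show ?case by simp
next
  case (Suc n)
  have "(1 - b) ^ Suc n - 1 = (1 - b) * ((1 - b) ^ n - 1) - b" by (simp add: algebra_simps)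
  then show ?case using Suc by (metis dvd_diff dvd_mult dvd_refl)
qed

lemma L1:
  fixes a b :: "'a::idom"
  assumes "a + b = 1" "\<not> b dvd 1" "b \<noteq> 0" "i < i'" "i' < N"
  shows "\<not> b ^ N dvd (a ^ N * b ^ i - a ^ N * b ^ i')"
proof
  assume H: "b ^ N dvd (a ^ N * b ^ i - a ^ N * b ^ i')"
  show False
  proof -
    have True: "i < N" using assms by simp
    have e1: "a ^ N * b ^ i - a ^ N * b ^ i' = b ^ i * (a ^ N * (1 - b ^ (i' - i)))"
      using assms(4) by (simp add: algebra_simps flip: power_add)
    have e2: "b ^ N = b ^ i * b ^ (N - i)" using True by (simp flip: power_add)
    have "b ^ (N - i) dvd a ^ N * (1 - b ^ (i' - i))"
      using H unfolding e1 e2 using assms(3) by simp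
    then have "b dvd a ^ N * (1 - b ^ (i' - i))"
      using True by (meson dvd_power dvd_trans zero_less_diff)
    moreover have "b dvd a ^ N * b ^ (i' - i)"
      using assms(4) by (simp add: dvd_power)
    moreover have "a ^ N = a ^ N * (1 - b ^ (i' - i)) + a ^ N * b ^ (i' - i)"
      by (simp add: algebra_simps)
    ultimately have "b dvd a ^ N" by (metis dvd_add)
    moreover have "a = 1 - b" using assms(1) by (simp add: algebra_simps)
    ultimately have "b dvd (1 - b) ^ N" by simp
    moreover have "(1::'a) = (1 - b) ^ N - ((1 - b) ^ N - 1)" by simp
    ultimately have "b dvd 1" using one_minus_pow[of b N] by (metis dvd_diff)
    then show False using assms by simp
  qed
qed


lemma noarrD:
  assumes "noarr TYPE('a::comm_ring_1) N" "\<forall>i<N. (a::'a) dvd f i"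
    "\<forall>i<N. \<forall>i'<N. i \<noteq> i' \<longrightarrow> \<not> b dvd (f i - f i')"
    "\<forall>j<N. b dvd g j" "\<forall>j<N. \<forall>j'<N. j \<noteq> j' \<longrightarrow> \<not> a dvd (g j - g j')"
  shows False
  using assms unfolding noarr_def by blast

lemma unit_cancel:
  fixes u :: "'a::comm_ring_1"
  assumes "u dvd 1" "d dvd x * u" shows "d dvd x"
proof -
  obtain k where k: "1 = u * k" using assms(1) by (auto elim: dvdE)
  have "x = (x * u) * k" using k by (metis mult.assoc mult_1_right)
  then show ?thesis using assms(2) by (metis dvd_mult2)
qed

lemma local_ring:
  fixes M :: "'a::idom set"
  assumes N: "noarr TYPE('a) N" and M: "maximal_ideal M" and t: "t \<notin> M"
  shows "t dvd 1"
proof (rule ccontr)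
  assume nu: "\<not> t dvd 1"
  have MI: "is_ideal M" and MU: "M \<noteq> UNIV" using M by (auto simp: maximal_ideal_def)
  define J where "J = {m + t * r | m r. m \<in> M}"
  have "is_ideal J"
    unfolding is_ideal_def J_def
  proof (intro conjI ballI allI impI)
    show "0 \<in> {m + t * r |m r. m \<in> M}" using MI by (force simp: is_ideal_def)
  next
    fix x y assume "x \<in> {m + t * r |m r. m \<in> M}" "y \<in> {m + t * r |m r. m \<in> M}"
    then obtain m1 r1 m2 r2 where "x = m1 + t * r1" "y = m2 + t * r2" "m1 \<in> M" "m2 \<in> M" by blast
    then show "x + y \<in> {m + t * r |m r. m \<in> M}"
    proof -
      have "x + y = (m1 + m2) + t * (r1 + r2)" using \<open>x = _\<close> \<open>y = _\<close> by (simp add: algebra_simps)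
      moreover have "m1 + m2 \<in> M" using ideal_add[OF MI] \<open>m1 \<in> M\<close> \<open>m2 \<in> M\<close> by blast
      ultimately show ?thesis by blast
    qed
  next
    fix r x assume "x \<in> {m + t * r |m r. m \<in> M}"
    then obtain m1 r1 where "x = m1 + t * r1" "m1 \<in> M" by blast
    then show "r * x \<in> {m + t * r |m r. m \<in> M}"
    proof -
      have "r * x = (r * m1) + t * (r * r1)" using \<open>x = _\<close> by (simp add: algebra_simps)
      moreover have "r * m1 \<in> M" using ideal_mult[OF MI] \<open>m1 \<in> M\<close> by blast
      ultimately show ?thesis by blast
    qed
  qed
  moreover have "M \<subseteq> J"
  proof
    fix x assume "x \<in> M"
    moreover have "x = x + t * 0" by simp
    ultimately show "x \<in> J" unfolding J_def by blast
  qed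
  moreover have "t \<in> J"
  proof -
    have "t = 0 + t * 1" by simp
    moreover have "(0::'a) \<in> M" using MI by (simp add: is_ideal_def)
    ultimately show ?thesis unfolding J_def by blast
  qed
  moreover have "\<forall>J. is_ideal J \<and> M \<subseteq> J \<longrightarrow> J = M \<or> J = UNIV" using M by (simp add: maximal_ideal_def)
  ultimately have "J = M \<or> J = UNIV" by blast
  then have "J = UNIV" using t \<open>t \<in> J\<close> by blast
  then have "1 \<in> J" by simp
  then obtain a r where ar: "1 = a + t * r" "a \<in> M" unfolding J_def by blast
  define b where "b = t * r"
  have ab: "a + b = 1" "b + a = 1" using ar b_def by (simp_all add: add.commute)
  have bnu: "\<not> b dvd 1" unfolding b_def using nu by (meson dvd_mult_left)
  have anu: "\<not> a dvd 1" using ideal_unit[OF MI _ ar(2)] MU by blast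
  have b0: "b \<noteq> 0" using ab anu by auto
  have a0: "a \<noteq> 0" using ab bnu by auto
  have X: False if "\<forall>i<N. \<forall>i'<N. i \<noteq> i' \<longrightarrow> \<not> b^N dvd (a^N * b^i - a^N * b^i')" "\<forall>j<N. \<forall>j'<N. j \<noteq> j' \<longrightarrow> \<not> a^N dvd (b^N * a^j - b^N * a^j')"
    by (rule noarrD[OF N, of "a^N" "\<lambda>i. a^N * b^i" "b^N" "\<lambda>i. b^N * a^i"]) (use that in auto)
  have "\<forall>i<N. \<forall>i'<N. i \<noteq> i' \<longrightarrow> \<not> b^N dvd (a^N * b^i - a^N * b^i')"
    by (rule pairwise_from_lt[where f="\<lambda>i. a^N * b^i"], rule L1[OF ab(1) bnu b0])
  moreover have "\<forall>j<N. \<forall>j'<N. j \<noteq> j' \<longrightarrow> \<not> a^N dvd (b^N * a^j - b^N * a^j')"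
    by (rule pairwise_from_lt[where f="\<lambda>i. b^N * a^i"], rule L1[OF ab(2) anu a0])
  ultimately show False using X by blast
qed


lemma unit_one_minus:
  fixes M :: "'a::idom set"
  assumes N: "noarr TYPE('a) N" and M: "maximal_ideal M" and s: "s \<in> M" and k: "0 < k"
  shows "(1 - s ^ k) dvd 1"
proof (rule local_ring[OF N M])
  have MI: "is_ideal M" and MU: "M \<noteq> UNIV" using M by (auto simp: maximal_ideal_def)
  show "1 - s ^ k \<notin> M"
  proof
    assume h: "1 - s ^ k \<in> M"
    have "s ^ k = s ^ (k - 1) * s" using k by (metis Suc_diff_1 power_Suc2)
    then have "s ^ k \<in> M" using ideal_mult[OF MI s] by simp
    then have "(1 - s ^ k) + s ^ k \<in> M" using ideal_add[OF MI h] by blast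
    then have "1 \<in> M" by simp
    then show False using ideal_unit[OF MI, of 1] MU by simp
  qed
qed

lemma L2:
  fixes M :: "'a::idom set"
  assumes N: "noarr TYPE('a) N" and M: "maximal_ideal M" and s: "s \<in> M" and ii: "i < i'"
    and d: "d dvd (c * s ^ i - c * s ^ i')"
  shows "d dvd c * s ^ i"
proof -
  have "c * s ^ i - c * s ^ i' = (c * s ^ i) * (1 - s ^ (i' - i))"
    using ii by (simp add: algebra_simps flip: power_add)
  moreover have u: "(1 - s ^ (i' - i)) dvd 1" using unit_one_minus[OF N M s] ii by simp
  ultimately show ?thesis using d unit_cancel by metis
qed

lemma LD:
  fixes M :: "'a::idom set"
  assumes N: "noarr TYPE('a) N" and M: "maximal_ideal M" and s: "s \<in> M"
  shows "b dvd a * s ^ N \<or> a dvd b * s ^ N"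
proof (rule ccontr)
  assume h: "\<not> (b dvd a * s ^ N \<or> a dvd b * s ^ N)"
  have p1: "\<forall>i<N. \<forall>i'<N. i \<noteq> i' \<longrightarrow> \<not> b dvd (a * s ^ i - a * s ^ i')"
  proof (rule pairwise_from_lt)
    fix i i' assume "i < i'" "i' < N"
    show "\<not> b dvd (a * s ^ i - a * s ^ i')"
    proof
      assume "b dvd (a * s ^ i - a * s ^ i')"
      then have "b dvd a * s ^ i" using L2[OF N M s \<open>i < i'\<close>] by blast
      moreover have "a * s ^ i dvd a * s ^ N" using \<open>i < i'\<close> \<open>i' < N\<close> by (simp add: le_imp_power_dvd)
      ultimately show False using h dvd_trans by blast
    qed
  qed
  have p2: "\<forall>i<N. \<forall>i'<N. i \<noteq> i' \<longrightarrow> \<not> a dvd (b * s ^ i - b * s ^ i')"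
  proof (rule pairwise_from_lt)
    fix i i' assume "i < i'" "i' < N"
    show "\<not> a dvd (b * s ^ i - b * s ^ i')"
    proof
      assume "a dvd (b * s ^ i - b * s ^ i')"
      then have "a dvd b * s ^ i" using L2[OF N M s \<open>i < i'\<close>] by blast
      moreover have "b * s ^ i dvd b * s ^ N" using \<open>i < i'\<close> \<open>i' < N\<close> by (simp add: le_imp_power_dvd)
      ultimately show False using h dvd_trans by blast
    qed
  qed
  show False
    by (rule noarrD[OF N, of a "\<lambda>i. a * s ^ i" b "\<lambda>i. b * s ^ i"]) (use p1 p2 in auto)
qed

lemma LA:
  fixes M :: "'a::idom set" and s y :: 'a
  assumes N: "noarr TYPE('a) N" and M: "maximal_ideal M" and P: "prime_ideal P"
    and s: "s \<notin> P" and y: "y \<in> P"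
  shows "s dvd y"
proof (cases "s dvd 1")
  case True then show ?thesis by (meson dvd_trans one_dvd)
next
  case False
  then have sM: "s \<in> M" using local_ring[OF N M] by blast
  have PI: "is_ideal P" using P by (simp add: prime_ideal_def)
  have s0: "s \<noteq> 0" using s PI by (auto simp: is_ideal_def)
  show ?thesis
  proof (rule ccontr)
    assume h: "\<not> s dvd y"
    have p1: "\<forall>i<N. \<forall>i'<N. i \<noteq> i' \<longrightarrow> \<not> s ^ N dvd (y * s ^ i - y * s ^ i')"
    proof (rule pairwise_from_lt)
      fix i i' assume "i < i'" "i' < N"
      show "\<not> s ^ N dvd (y * s ^ i - y * s ^ i')"
      proof
        assume "s ^ N dvd (y * s ^ i - y * s ^ i')"
        then have "s ^ N dvd y * s ^ i" using L2[OF N M sM \<open>i < i'\<close>] by blast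
        moreover have "s ^ N = s ^ (N - i) * s ^ i" using \<open>i < i'\<close> \<open>i' < N\<close> by (simp flip: power_add)
        ultimately have "s ^ (N - i) dvd y" using s0 by simp
        moreover have "s dvd s ^ (N - i)" using \<open>i < i'\<close> \<open>i' < N\<close> by (simp add: dvd_power)
        ultimately show False using h dvd_trans by blast
      qed
    qed
    have p2: "\<forall>i<N. \<forall>i'<N. i \<noteq> i' \<longrightarrow> \<not> y dvd (s ^ N * s ^ i - s ^ N * s ^ i')"
    proof (rule pairwise_from_lt)
      fix i i' assume "i < i'" "i' < N"
      show "\<not> y dvd (s ^ N * s ^ i - s ^ N * s ^ i')"
      proof
        assume "y dvd (s ^ N * s ^ i - s ^ N * s ^ i')"
        then have "y dvd s ^ N * s ^ i" using L2[OF N M sM \<open>i < i'\<close>] by blast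
        then obtain k where "s ^ N * s ^ i = y * k" by (auto elim: dvdE)
        then have "s ^ (N + i) \<in> P" using ideal_mult2[OF PI y, of k] by (simp add: power_add)
        then show False using prime_pow[OF P] s by blast
      qed
    qed
    show False
      by (rule noarrD[OF N, of y "\<lambda>i. y * s ^ i" "s ^ N" "\<lambda>i. s ^ N * s ^ i"]) (use p1 p2 in auto)
  qed
qed


lemma LV_ind:
  fixes M :: "'a::idom set"
  assumes N: "noarr TYPE('a) N" and M: "maximal_ideal M"
    and m0: "m \<noteq> 0" and mdiv: "\<forall>x\<in>M. m dvd x"
  shows "b dvd a * m ^ k \<Longrightarrow> b dvd a \<or> a dvd b"
proof (induction k)
  case 0 then show ?case by simp
next
  case (Suc k)
  obtain t where t: "a * m ^ Suc k = b * t" using Suc.prems by (auto elim: dvdE)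
  show ?case
  proof (cases "t dvd 1")
    case True
    have "a dvd b * t" using t[symmetric] by (simp add: mult.assoc)
    then show ?thesis using unit_cancel[OF True] by blast
  next
    case False
    then have "t \<in> M" using local_ring[OF N M] by blast
    then obtain t' where "t = m * t'" using mdiv by (auto elim: dvdE)
    with t have "(a * m ^ k) * m = (b * t') * m" by (simp add: algebra_simps)
    then have "a * m ^ k = b * t'" using m0 by simp
    then show ?thesis using Suc.IH by simp
  qed
qed

lemma emb_inj: "emb a = emb b \<longleftrightarrow> a = b"
  by (simp add: emb_def eq_fract)

theorem mainTheorem12:
  fixes M :: "'a::idom set"
  assumes "dp_minimal TYPE('a)"
    and "maximal_ideal M"
  shows "(\<forall>P. prime_ideal P \<and> P \<noteq> M \<longrightarrow>
            colon (emb ` P) (emb ` P) = localization P)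
       \<and> (\<not> valuation_ring TYPE('a) \<longrightarrow> frac_inv M = colon (emb ` M) (emb ` M))"
proof -
  obtain N where N: "noarr TYPE('a) N" using core[OF assms(1)] by blast
  note M = assms(2)
  have MI: "is_ideal M" and MU: "M \<noteq> UNIV" using M by (auto simp: maximal_ideal_def)
  have part1: "colon (emb ` P) (emb ` P) = localization P" if P: "prime_ideal P" and PM: "P \<noteq> M" for P
  proof -
    have PI: "is_ideal P" and PU: "P \<noteq> UNIV" using P by (auto simp: prime_ideal_def)
    have "P \<subseteq> M"
    proof
      fix x assume "x \<in> P"
      show "x \<in> M"
      proof (rule ccontr)
        assume "x \<notin> M"
        then have "x dvd 1" using local_ring[OF N M] by blast
        then show False using ideal_unit[OF PI _ \<open>x \<in> P\<close>] PU by blast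
      qed
    qed
    then obtain s where sM: "s \<in> M" and sP: "s \<notin> P" using PM by blast
    have s0: "s \<noteq> 0" using sP PI by (auto simp: is_ideal_def)
    have sNP: "s ^ N \<notin> P" using prime_pow[OF P] sP by blast
    have one: "(1::'a) \<notin> P" using ideal_unit[OF PI, of 1] PU by auto
    show ?thesis
    proof
      show "colon (emb ` P) (emb ` P) \<subseteq> localization P"
      proof
        fix x assume x: "x \<in> colon (emb ` P) (emb ` P)"
        obtain a b where xab: "x = Fract a b" and b0: "b \<noteq> 0" by (cases x) blast
        from LD[OF N M sM, of b a] show "x \<in> localization P"
        proof
          assume "b dvd a * s ^ N"
          then obtain t where t: "a * s ^ N = b * t" by (auto elim: dvdE)
          have "x = Fract t (s ^ N)" unfolding xab using b0 s0 t by (simp add: eq_fract mult.commute)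
          then show ?thesis using sNP unfolding localization_def by blast
        next
          assume "a dvd b * s ^ N"
          then obtain t where t: "b * s ^ N = a * t" by (auto elim: dvdE)
          show ?thesis
          proof (cases "a = 0")
            case True
            then have "x = Fract 0 1" unfolding xab using b0 by (simp add: eq_fract)
            then show ?thesis using one unfolding localization_def by blast
          next
            case a0: False
            have t0: "t \<noteq> 0" using t b0 s0 by auto
            show ?thesis
            proof (cases "t \<in> P")
              case False
              have "x = Fract (s ^ N) t" unfolding xab using b0 t0 t by (simp add: eq_fract mult.commute)
              then show ?thesis using False unfolding localization_def by blast
            next
              case True
              then have "x * emb t \<in> emb ` P" using x unfolding colon_def by blast
              moreover have "x * emb t = emb (s ^ N)"
                unfolding xab emb_def using b0 t by (simp add: eq_fract mult.commute)
              ultimately show ?thesis using sNP emb_inj by (metis imageE)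
            qed
          qed
        qed
      qed
    next
      show "localization P \<subseteq> colon (emb ` P) (emb ` P)"
      proof
        fix x assume "x \<in> localization P"
        then obtain a s' where xs: "x = Fract a s'" and s': "s' \<notin> P" unfolding localization_def by blast
        have s'0: "s' \<noteq> 0" using s' PI by (auto simp: is_ideal_def)
        show "x \<in> colon (emb ` P) (emb ` P)"
          unfolding colon_def
        proof (intro CollectI ballI)
          fix y assume "y \<in> emb ` P"
          then obtain q where q: "y = emb q" "q \<in> P" by blast
          obtain z where z: "q = s' * z" using LA[OF N M P s' q(2)] by (auto elim: dvdE)
          have zP: "z \<in> P" using P q(2) s' z unfolding prime_ideal_def by blast
          have "x * y = emb (a * z)" unfolding xs q emb_def z using s'0 by (simp add: eq_fract)
          then show "x * y \<in> emb ` P" using ideal_mult[OF PI zP] by blast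
        qed
      qed
    qed
  qed
  have part2: "frac_inv M = colon (emb ` M) (emb ` M)" if nv: "\<not> valuation_ring TYPE('a)"
  proof
    show "colon (emb ` M) (emb ` M) \<subseteq> frac_inv M"
      unfolding frac_inv_def colon_def by blast
  next
    show "frac_inv M \<subseteq> colon (emb ` M) (emb ` M)"
    proof
      fix x assume x: "x \<in> frac_inv M"
      show "x \<in> colon (emb ` M) (emb ` M)"
        unfolding colon_def
      proof (intro CollectI ballI)
        fix y assume "y \<in> emb ` M"
        then obtain m where ym: "y = emb m" and mM: "m \<in> M" by blast
        show "x * y \<in> emb ` M"
        proof (rule ccontr)
          assume nM: "x * y \<notin> emb ` M"
          obtain r where r: "x * emb m = emb r" using x ym mM unfolding frac_inv_def colon_def by blast
          have rM: "r \<notin> M" using nM r ym by blast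
          have ru: "r dvd 1" using local_ring[OF N M rM] .
          have m0: "m \<noteq> 0"
          proof
            assume "m = 0"
            then have "x * y = emb 0" unfolding ym emb_def by (simp add: Zero_fract_def[symmetric])
            moreover have "(0::'a) \<in> M" using MI by (simp add: is_ideal_def)
            ultimately show False using nM by blast
          qed
          have mdiv: "\<forall>m'\<in>M. m dvd m'"
          proof
            fix m' assume "m' \<in> M"
            then obtain r' where r': "x * emb m' = emb r'" using x unfolding frac_inv_def colon_def by blast
            have "emb r * emb m' = emb r' * emb m" using r r' by (metis mult.commute mult.left_commute)
            then have "r * m' = r' * m" unfolding emb_def by (simp add: eq_fract)
            then have "m dvd m' * r" by (metis dvd_triv_right mult.commute)
            then show "m dvd m'" using unit_cancel[OF ru] by blast
          qed
          have dich: "a dvd b \<or> b dvd a" for a b :: 'a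
            using LD[OF N M mM, of b a] LV_ind[OF N M m0 mdiv, of b a] LV_ind[OF N M m0 mdiv, of a b] by blast
          have "valuation_ring TYPE('a)"
            unfolding valuation_ring_def
          proof
            fix z :: "'a fract"
            obtain a b where zab: "z = Fract a b" and b0: "b \<noteq> 0" by (cases z) blast
            show "z \<in> range emb \<or> inverse z \<in> range emb"
            proof (cases "b dvd a")
              case True
              then obtain c where "a = b * c" by (auto elim: dvdE)
              then have "z = emb c" unfolding zab emb_def using b0 by (simp add: eq_fract)
              then show ?thesis by blast
            next
              case False
              then have "a dvd b" using dich by blast
              then obtain c where c: "b = a * c" by (auto elim: dvdE)
              then have a0: "a \<noteq> 0" using b0 by auto
              have "inverse z = emb c" unfolding zab emb_def using a0 c by (simp add: eq_fract)
              then show ?thesis by blast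
            qed
          qed
          then show False using nv by blast
        qed
      qed
    qed
  qed
  show ?thesis using part1 part2 by blast
qed

end
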